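(* Let $p\in(1,\infty)$ and let $u\in C(Q_1)$ be a viscosity solution of $\mathcal{L}u-u_t=f$ in $U^+:=\{u>0\}$, where $f$ satisfies $0<c_0\le f\le c_1$. Then for every $(z,s)\in\overline{\{u>0\}}$ and $r>0$ with $Q_r(z,s)\subset Q_1$, $$\sup_{(x,t)\in\partial_pQ^-_r(z,s)}u(x,t)\ge\mu_0r^2+u(z,s),\qquad \mu_0=\min\Big(\frac{pc_0}{4(n+p-2)},\frac{c_0}{2}\Big).$$
   Context: $\mathcal{L}v=\frac1p\Delta v+\frac{p-2}{p}\langle D^2v\frac{\nabla v}{|\nabla v|},\frac{\nabla v}{|\nabla v|}\rangle$; viscosity solutions are defined via $C^2$ test functions, using $\mathcal{L}\phi-\phi_t$ when $\nabla\phi\neq0$, and $\Delta\phi+(p-2)\lambda_{\max}(D^2\phi)-\phi_t$ (if $p\ge2$) or $\Delta\phi+(p-2)\lambda_{\min}(D^2\phi)-\phi_t$ (if $1<p<2$) when $\nabla\phi=0$. $Q_r(z,s)=B_r(z)\times(s-r^2,s+r^2)$, $Q_1=Q_1(0,0)$, $Q^-_r(z,s)=B_r(z)\times(s-r^2,s]$, and $\partial_p$ denotes the parabolic boundary (lateral boundary together with the bottom). *)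

theory Defs
  imports "HOL-Analysis.Analysis"
begin

text \<open>Points of space-time are pairs (x,t) with x in R^n (n = CARD('n)) and t real.\<close>

definition cyl :: "real \<Rightarrow> real^'n \<Rightarrow> real \<Rightarrow> ((real^'n) \<times> real) set" where
  "cyl r z s = {(x,t). dist x z < r \<and> s - r^2 < t \<and> t < s + r^2}"

definition Q1 :: "((real^'n) \<times> real) set" where
  "Q1 = cyl 1 0 0"

text \<open>Parabolic boundary of Q^-_r(z,s) = B_r(z) x (s-r^2, s]: lateral part plus bottom.\<close>
definition par_bdry_lower :: "real \<Rightarrow> real^'n \<Rightarrow> real \<Rightarrow> ((real^'n) \<times> real) set" where
  "par_bdry_lower r z s =
     {(x,t). dist x z = r \<and> s - r^2 \<le> t \<and> t \<le> s}
     \<union> {(x,t). dist x z \<le> r \<and> t = s - r^2}"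

definition mtrace :: "real^'n^'n \<Rightarrow> real" where
  "mtrace H = (\<Sum>i\<in>UNIV. H $ i $ i)"

definition eig_max :: "real^'n^'n \<Rightarrow> real" where
  "eig_max H = Max {c. \<exists>v. v \<noteq> 0 \<and> H *v v = c *\<^sub>R v}"

definition eig_min :: "real^'n^'n \<Rightarrow> real" where
  "eig_min H = Min {c. \<exists>v. v \<noteq> 0 \<and> H *v v = c *\<^sub>R v}"

text \<open>The normalized p-Laplacian of a test function with gradient g and Hessian H (g nonzero).\<close>
definition Lop :: "real \<Rightarrow> real^'n \<Rightarrow> real^'n^'n \<Rightarrow> real" where
  "Lop p g H = (1/p) * mtrace H + ((p-2)/p) * ((H *v g) \<bullet> g) / (norm g)^2"

text \<open>Operator used for subsolutions (upper envelope at vanishing gradient).\<close>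
definition F_sub :: "real \<Rightarrow> real^'n \<Rightarrow> real^'n^'n \<Rightarrow> real \<Rightarrow> real" where
  "F_sub p g H ph_t =
     (if g \<noteq> 0 then Lop p g H - ph_t
      else if p \<ge> 2 then (1/p) * (mtrace H + (p-2) * eig_max H) - ph_t
      else (1/p) * (mtrace H + (p-2) * eig_min H) - ph_t)"

text \<open>Operator used for supersolutions (lower envelope at vanishing gradient).\<close>
definition F_super :: "real \<Rightarrow> real^'n \<Rightarrow> real^'n^'n \<Rightarrow> real \<Rightarrow> real" where
  "F_super p g H ph_t =
     (if g \<noteq> 0 then Lop p g H - ph_t
      else if p \<ge> 2 then (1/p) * (mtrace H + (p-2) * eig_min H) - ph_t
      else (1/p) * (mtrace H + (p-2) * eig_max H) - ph_t)"

definition C2_test ::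
  "(real^'n \<Rightarrow> real \<Rightarrow> real) \<Rightarrow> ((real^'n) \<times> real) set \<Rightarrow>
   (real^'n \<Rightarrow> real \<Rightarrow> real^'n) \<Rightarrow> (real^'n \<Rightarrow> real \<Rightarrow> real) \<Rightarrow>
   (real^'n \<Rightarrow> real \<Rightarrow> real^'n^'n) \<Rightarrow> (real^'n \<Rightarrow> real \<Rightarrow> real^'n) \<Rightarrow>
   (real^'n \<Rightarrow> real \<Rightarrow> real) \<Rightarrow> bool" where
  "C2_test phi N Dx Dt H Dxt Dtt \<longleftrightarrow> open N \<and>
     (\<forall>(x,t)\<in>N.
        ((\<lambda>y. phi (fst y) (snd y)) has_derivative
           (\<lambda>h. Dx x t \<bullet> fst h + Dt x t * snd h)) (at (x,t)) \<and>
        ((\<lambda>y. Dx (fst y) (snd y)) has_derivative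
           (\<lambda>h. H x t *v fst h + snd h *\<^sub>R Dxt x t)) (at (x,t)) \<and>
        ((\<lambda>y. Dt (fst y) (snd y)) has_derivative
           (\<lambda>h. Dxt x t \<bullet> fst h + Dtt x t * snd h)) (at (x,t))) \<and>
     continuous_on N (\<lambda>y. H (fst y) (snd y)) \<and>
     continuous_on N (\<lambda>y. Dxt (fst y) (snd y)) \<and>
     continuous_on N (\<lambda>y. Dtt (fst y) (snd y))"

definition visc_sub :: "real \<Rightarrow> (real^'n \<Rightarrow> real \<Rightarrow> real) \<Rightarrow> (real^'n \<Rightarrow> real \<Rightarrow> real) \<Rightarrow>
    ((real^'n) \<times> real) set \<Rightarrow> bool" where
  "visc_sub p f u U \<longleftrightarrow> continuous_on U (\<lambda>y. u (fst y) (snd y)) \<and>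
     (\<forall>x0 t0 N phi Dx Dt H Dxt Dtt.
        (x0,t0) \<in> N \<and> N \<subseteq> U \<and> C2_test phi N Dx Dt H Dxt Dtt \<and>
        (\<forall>(y,\<tau>)\<in>N. u y \<tau> - phi y \<tau> \<le> u x0 t0 - phi x0 t0)
        \<longrightarrow> F_sub p (Dx x0 t0) (H x0 t0) (Dt x0 t0) \<ge> f x0 t0)"

definition visc_super :: "real \<Rightarrow> (real^'n \<Rightarrow> real \<Rightarrow> real) \<Rightarrow> (real^'n \<Rightarrow> real \<Rightarrow> real) \<Rightarrow>
    ((real^'n) \<times> real) set \<Rightarrow> bool" where
  "visc_super p f u U \<longleftrightarrow> continuous_on U (\<lambda>y. u (fst y) (snd y)) \<and>
     (\<forall>x0 t0 N phi Dx Dt H Dxt Dtt.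
        (x0,t0) \<in> N \<and> N \<subseteq> U \<and> C2_test phi N Dx Dt H Dxt Dtt \<and>
        (\<forall>(y,\<tau>)\<in>N. u y \<tau> - phi y \<tau> \<ge> u x0 t0 - phi x0 t0)
        \<longrightarrow> F_super p (Dx x0 t0) (H x0 t0) (Dt x0 t0) \<le> f x0 t0)"

definition visc_sol :: "real \<Rightarrow> (real^'n \<Rightarrow> real \<Rightarrow> real) \<Rightarrow> (real^'n \<Rightarrow> real \<Rightarrow> real) \<Rightarrow>
    ((real^'n) \<times> real) set \<Rightarrow> bool" where
  "visc_sol p f u U \<longleftrightarrow> visc_sub p f u U \<and> visc_super p f u U"

end

theory Submission imports Defs begin
lemma mat_mulv: "mat k *v (x::real^'n) = k *\<^sub>R x"
  by (simp add: vec_eq_iff matrix_vector_mult_def mat_def if_distrib if_distribR cong: if_cong)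

lemma aux: "d \<noteq> (0::real) \<Longrightarrow> e * (inverse (d^2) * (2*y*d) * inverse (d^2)) = 2*e*y/d^3"
  by (simp add: field_simps power2_eq_square power3_eq_cube)

lemma C2_barrier:
  fixes z :: "real^'n"
  assumes "open N" "\<forall>y\<in>N. snd y < s"
  shows "C2_test (\<lambda>x t. A + c*((x - z)\<bullet>(x - z) + (s - t)) + e/(s - t)) N
     (\<lambda>x t. (2*c) *\<^sub>R (x - z)) (\<lambda>x t. - c + e/(s-t)^2) (\<lambda>x t. mat (2*c))
     (\<lambda>x t. 0) (\<lambda>x t. 2*e/(s-t)^3)"
  unfolding C2_test_def
proof (intro conjI ballI)
  show "open N" by fact
next
  fix y assume yN: "y \<in> N"
  obtain x t where y: "y = (x,t)" by fastforce
  have ts: "s - t \<noteq> 0" "s \<noteq> t" using assms(2) yN y by auto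
  show "case y of (x, t) \<Rightarrow>
          ((\<lambda>y. A + c * ((fst y - z) \<bullet> (fst y - z) + (s - snd y)) + e / (s - snd y)) has_derivative
           (\<lambda>h. (2 * c) *\<^sub>R (x - z) \<bullet> fst h + (- c + e / (s - t)\<^sup>2) * snd h)) (at (x, t)) \<and>
          ((\<lambda>y. (2 * c) *\<^sub>R (fst y - z)) has_derivative (\<lambda>h. mat (2 * c) *v fst h + snd h *\<^sub>R 0)) (at (x, t)) \<and>
          ((\<lambda>y. - c + e / (s - snd y)\<^sup>2) has_derivative (\<lambda>h. 0 \<bullet> fst h + 2 * e / (s - t) ^ 3 * snd h)) (at (x, t))"
    unfolding y prod.case
  proof (intro conjI)
    show "((\<lambda>y. A + c * ((fst y - z) \<bullet> (fst y - z) + (s - snd y)) + e / (s - snd y)) has_derivative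
           (\<lambda>h. (2 * c) *\<^sub>R (x - z) \<bullet> fst h + (- c + e / (s - t)\<^sup>2) * snd h)) (at (x, t))"
      apply (rule has_derivative_eq_rhs)
       apply (rule derivative_eq_intros refl | simp add: ts)+
      apply (rule ext)
      using ts apply (simp add: algebra_simps inner_commute power2_eq_square divide_simps)
      done
    show "((\<lambda>y. (2 * c) *\<^sub>R (fst y - z)) has_derivative (\<lambda>h. mat (2 * c) *v fst h + snd h *\<^sub>R 0)) (at (x, t))"
      apply (rule has_derivative_eq_rhs)
       apply (rule derivative_eq_intros refl | simp)+
      apply (simp add: mat_mulv)
      done
    show "((\<lambda>y. - c + e / (s - snd y)\<^sup>2) has_derivative (\<lambda>h. 0 \<bullet> fst h + 2 * e / (s - t) ^ 3 * snd h)) (at (x, t))"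
      apply (rule has_derivative_eq_rhs)
       apply (rule derivative_eq_intros refl | simp add: ts)+
      apply (rule ext)
      using aux[OF ts(1)] by simp
  qed
next
  show "continuous_on N (\<lambda>y. mat (2 * c) :: real^'n^'n)" by (rule continuous_on_const)
  show "continuous_on N (\<lambda>y. 0 :: real^'n)" by (rule continuous_on_const)
  show "continuous_on N (\<lambda>y. 2 * e / (s - snd y) ^ 3)"
    using assms(2) by (intro continuous_intros) auto
qed

lemma eigs: "{c. \<exists>v. v \<noteq> 0 \<and> (mat k :: real^'n^'n) *v v = c *\<^sub>R v} = {k}"
proof -
  obtain w :: "real^'n" where "w \<noteq> 0" by (metis axis_eq_0_iff zero_neq_one)
  show ?thesis
    using \<open>w\<noteq>0\<close> by (auto simp: mat_mulv scaleR_cancel_right)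
qed

lemma F_barrier:
  fixes g :: "real^'n"
  assumes "p \<noteq> 0"
  shows "F_sub p g (mat k) d = (1/p)*(real CARD('n)*k + (p-2)*k) - d"
proof -
  have tr: "mtrace (mat k :: real^'n^'n) = real CARD('n) * k"
    by (simp add: mtrace_def mat_def)
  have em: "eig_max (mat k :: real^'n^'n) = k" "eig_min (mat k :: real^'n^'n) = k"
    by (simp_all add: eig_max_def eig_min_def eigs)
  have "Lop p g (mat k) = (1/p)*(real CARD('n)*k + (p-2)*k)" if "g \<noteq> 0"
  proof -
    have gg: "g \<bullet> g \<noteq> 0" using that by simp
    show ?thesis using gg assms
      by (simp add: Lop_def tr mat_mulv power2_norm_eq_inner field_simps)
  qed
  then show ?thesis by (simp add: F_sub_def em tr)
qed

lemma absaux: "\<bar>a - b\<bar> < e/4 \<Longrightarrow> b - e/4 \<le> (a::real)" by linarith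

lemma absaux2: "2*(\<bar>b\<bar>+1) \<le> x \<Longrightarrow> b < (x::real)" by (cases "b \<ge> 0") simp_all

lemma open_Q1: "open (Q1 :: ((real^'n) \<times> real) set)"
proof -
  have "(Q1 :: ((real^'n) \<times> real) set) = ball 0 1 \<times> {-1<..<1}"
    by (auto simp: Q1_def cyl_def dist_commute)
  then show ?thesis by (metis open_Times open_ball open_greaterThanLessThan)
qed

lemma closure_cyl: "r > 0 \<Longrightarrow> closure (cyl r z s) = cball z r \<times> {s-r^2..s+r^2}"
proof -
  assume r: "r > 0"
  have "cyl r z s = ball z r \<times> {s-r^2<..<s+r^2}"
    by (auto simp: cyl_def dist_commute)
  then show ?thesis using r by (simp add: closure_Times)
qed

lemma pb_sub: "par_bdry_lower r z s \<subseteq> cball z r \<times> {s-r^2..s+r^2}"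
  by (auto simp: par_bdry_lower_def dist_commute)

lemma main:
  fixes u f :: "real^'n \<Rightarrow> real \<Rightarrow> real" and p c0 c M r s :: real and z :: "real^'n"
  assumes p: "1 < p" and u_cont: "continuous_on Q1 (\<lambda>y. u (fst y) (snd y))"
   and sub: "visc_sub p f u {(x,t) \<in> Q1. u x t > 0}"
   and c0: "0 < c0" and fb: "\<forall>(x,t)\<in>{(x,t)\<in>Q1. u x t > 0}. c0 \<le> f x t"
   and pos: "u z s > 0" and r: "r > 0" and K: "cball z r \<times> {s-r^2..s+r^2} \<subseteq> Q1"
   and bd: "\<forall>(x,t)\<in>par_bdry_lower r z s. u x t \<le> M"
   and cdef: "c = min (p * c0 / (4 * (real CARD('n) + p - 2))) (c0 / 2)"
  shows "M \<ge> c * r^2 + u z s"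
proof (rule ccontr)
  assume "\<not> M \<ge> c * r^2 + u z s"
  hence Mlt: "M < c * r^2 + u z s" by simp
  define n where "n = real CARD('n)"
  have n1: "n \<ge> 1" unfolding n_def by simp
  have np: "n + p - 2 > 0" using n1 p by simp
  have "p * c0 / (4 * (n + p - 2)) > 0" using c0 np p by simp
  hence cpos: "c > 0" using cdef c0 n_def by simp
  have cb1: "2*c*(n+p-2)/p \<le> c0/2"
  proof -
    have "c \<le> p * c0 / (4 * (n + p - 2))" using cdef n_def by simp
    hence "c * (4 * (n + p - 2)) \<le> p * c0" using np by (simp add: le_divide_eq)
    thus ?thesis using p by (simp add: divide_simps) argo
  qed
  have cb2: "c \<le> c0/2" unfolding cdef by (rule min.cobounded2)
  define g where "g = (\<lambda>y. u (fst y) (snd y))"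
  define \<eta> where "\<eta> = min (u z s) (c*r^2 + u z s - M) / 2"
  have eta: "\<eta> > 0" "\<eta> < u z s" "M - (u z s - \<eta>) - c*r^2 < 0"
    using pos Mlt by (auto simp: \<eta>_def min_def field_simps)
  define A where "A = u z s - \<eta>"
  have Apos: "A > 0" using eta by (simp add: A_def)
  have MA: "M - A - c*r^2 < 0" using eta by (simp add: A_def)
  have zsQ: "(z,s) \<in> Q1" using K r by auto
  obtain d0 where d0: "d0 > 0" "\<forall>y\<in>Q1. dist y (z,s) < d0 \<longrightarrow> dist (g y) (g (z,s)) < \<eta>/4"
    using u_cont zsQ eta(1) unfolding continuous_on_iff g_def
    by (metis divide_pos_pos zero_less_numeral)
  define \<sigma> where "\<sigma> = min (d0/2) (min (r^2/2) (\<eta>/(4*c)))"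
  have s1: "\<sigma> \<le> d0/2" "\<sigma> \<le> r^2/2" "\<sigma> \<le> \<eta>/(4*c)" by (simp_all add: \<sigma>_def)
  have s0: "\<sigma> > 0" using d0 r eta cpos by (simp add: \<sigma>_def)
  have "\<sigma> * (4*c) \<le> \<eta>" using s1(3) cpos by (simp add: le_divide_eq)
  hence sig: "\<sigma> > 0" "\<sigma> < d0" "\<sigma> < r^2" "c*\<sigma> \<le> \<eta>/4"
    using s0 s1 d0 r by (auto simp: mult_ac)
  have "(z, s-\<sigma>) \<in> cball z r \<times> {s-r^2..s+r^2}" using sig r by auto
  hence zsig: "(z, s-\<sigma>) \<in> Q1" using K by blast
  have "dist (z, s-\<sigma>) (z,s) < d0" using sig by (simp add: dist_Pair_Pair)
  hence "dist (g (z, s-\<sigma>)) (g (z,s)) < \<eta>/4"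
    using d0(2) zsig by blast
  hence usig: "u z (s-\<sigma>) \<ge> u z s - \<eta>/4"
    unfolding g_def dist_real_def using absaux by simp
  define \<epsilon> where "\<epsilon> = \<sigma>*\<eta>/4"
  have epos: "\<epsilon> > 0" using sig eta by (simp add: \<epsilon>_def)
  define Cb where "Cb = cball z r \<times> {s-r^2..s+r^2}"
  have Cbc: "compact Cb" unfolding Cb_def by (intro compact_Times compact_cball compact_Icc)
  have gcont: "continuous_on Cb g" using u_cont K unfolding g_def Cb_def
    by (rule continuous_on_subset)
  have "(z,s) \<in> Cb" using r by (simp add: Cb_def)
  then obtain yB where yB: "yB \<in> Cb" "\<forall>y\<in>Cb. g y \<le> g yB"
    using continuous_attains_sup[OF Cbc _ gcont] by blast
  define B where "B = g yB"
  define \<tau> where "\<tau> = min (\<sigma>/2) (\<epsilon>/(2*(\<bar>B\<bar>+1)))"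
  have tau: "\<tau> > 0" "\<tau> < \<sigma>" using sig epos by (auto simp: \<tau>_def)
  have etau: "\<epsilon>/\<tau> > B"
  proof -
    have "\<tau> \<le> \<epsilon>/(2*(\<bar>B\<bar>+1))" by (simp add: \<tau>_def)
    hence "\<tau> * (2*(\<bar>B\<bar>+1)) \<le> \<epsilon>" by (simp add: le_divide_eq)
    hence "2*(\<bar>B\<bar>+1) \<le> \<epsilon>/\<tau>" using tau by (simp add: le_divide_eq mult.commute)
    thus ?thesis by (rule absaux2)
  qed
  define Dc where "Dc = cball z r \<times> {s-r^2..s-\<tau>}"
  have DcCb: "Dc \<subseteq> Cb" unfolding Dc_def Cb_def using tau by auto
  have Dcc: "compact Dc" unfolding Dc_def by (intro compact_Times compact_cball compact_Icc)
  define \<phi> where "\<phi> = (\<lambda>x t. A + c*((x - z)\<bullet>(x - z) + (s - t)) + \<epsilon>/(s - t))"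
  define W where "W = (\<lambda>y. max (g y) 0 - \<phi> (fst y) (snd y))"
  have Wcont: "continuous_on Dc W"
    unfolding W_def \<phi>_def
    using continuous_on_subset[OF gcont DcCb] tau
    by (intro continuous_intros) (auto simp: Dc_def)
  have zsD: "(z, s-\<sigma>) \<in> Dc" using sig tau r by (auto simp: Dc_def)
  obtain P where P: "P \<in> Dc" "\<forall>y\<in>Dc. W y \<le> W P"
    using continuous_attains_sup[OF Dcc _ Wcont] zsD by blast
  have Wz: "W (z, s-\<sigma>) \<ge> \<eta>/4"
  proof -
    have "\<epsilon>/\<sigma> = \<eta>/4" using sig by (simp add: \<epsilon>_def)
    hence "\<phi> z (s-\<sigma>) = A + c*\<sigma> + \<eta>/4" by (simp add: \<phi>_def)
    thus ?thesis unfolding W_def g_def using usig sig A_def by simp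
  qed
  have WP: "W P \<ge> \<eta>/4" using P zsD Wz by force
  obtain x0 t0 where P0: "P = (x0,t0)" by fastforce
  have x0: "dist z x0 \<le> r" and t0: "s - r^2 \<le> t0" "t0 \<le> s - \<tau>"
    using P(1) P0 by (auto simp: Dc_def)
  have st: "s - t0 > 0" using t0 tau by simp
  have xx: "(x0 - z)\<bullet>(x0 - z) \<ge> 0" by simp
  have ep0: "\<epsilon>/(s - t0) > 0" using epos st by simp
  have phiA: "\<phi> x0 t0 \<ge> A + c*((x0 - z)\<bullet>(x0 - z) + (s - t0))"
    using ep0 by (simp add: \<phi>_def)
  have upos: "u x0 t0 > 0"
  proof (rule ccontr)
    assume "\<not> u x0 t0 > 0"
    hence "W P = - \<phi> x0 t0" by (simp add: W_def g_def P0)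
    moreover have "\<phi> x0 t0 > 0" using phiA Apos cpos xx st
      by (smt (verit) mult_nonneg_nonneg)
    ultimately show False using WP eta by simp
  qed
  have WPe: "W P = u x0 t0 - \<phi> x0 t0" using upos by (simp add: W_def g_def P0)
  have ttop: "t0 < s - \<tau>"
  proof (rule ccontr)
    assume "\<not> t0 < s - \<tau>"
    hence "t0 = s - \<tau>" using t0 by simp
    hence st': "s - t0 = \<tau>" by simp
    have u1: "u x0 t0 \<le> B"
    proof -
      have "(x0,t0) \<in> Cb" using P(1) P0 DcCb by auto
      from yB(2)[rule_format, OF this] show ?thesis by (simp add: B_def g_def)
    qed
    have c1: "c*((x0 - z)\<bullet>(x0 - z) + (s - t0)) \<ge> 0" using cpos xx st by simp
    have "W P = u x0 t0 - (A + c*((x0 - z)\<bullet>(x0 - z) + (s - t0)) + \<epsilon>/\<tau>)"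
      using WPe st' by (simp add: \<phi>_def)
    hence "W P < 0" using u1 c1 etau Apos by linarith
    thus False using WP eta by simp
  qed
  have inpb: "W P < 0" if "(x0,t0) \<in> par_bdry_lower r z s" "(x0 - z)\<bullet>(x0 - z) + (s - t0) \<ge> r^2"
  proof -
    have "u x0 t0 \<le> M" using bd that(1) by auto
    moreover have "c*((x0 - z)\<bullet>(x0 - z) + (s - t0)) \<ge> c*r^2" using that(2) cpos by simp
    ultimately show ?thesis using WPe phiA MA by simp
  qed
  have tbot: "s - r^2 < t0"
  proof (rule ccontr)
    assume "\<not> s - r^2 < t0"
    hence "t0 = s - r^2" using t0 by simp
    hence "(x0,t0) \<in> par_bdry_lower r z s" "(x0 - z)\<bullet>(x0 - z) + (s - t0) \<ge> r^2"
      using x0 xx by (auto simp: par_bdry_lower_def dist_commute)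
    thus False using inpb WP eta by fastforce
  qed
  have xin: "dist z x0 < r"
  proof (rule ccontr)
    assume "\<not> dist z x0 < r"
    hence dr: "dist x0 z = r" using x0 by (simp add: dist_commute)
    hence "(x0 - z)\<bullet>(x0 - z) = r^2" by (simp add: dist_norm power2_norm_eq_inner[symmetric])
    hence "(x0,t0) \<in> par_bdry_lower r z s" "(x0 - z)\<bullet>(x0 - z) + (s - t0) \<ge> r^2"
      using dr t0 tau st by (auto simp: par_bdry_lower_def)
    thus False using inpb WP eta by fastforce
  qed
  define U where "U = {(x,t) \<in> Q1. u x t > 0}"
  define N where "N = (ball z r \<times> {s-r^2<..<s-\<tau>}) \<inter> (Q1 \<inter> g -` {0<..})"
  have Nopen: "open N" unfolding N_def
    by (intro open_Int open_Times open_ball open_greaterThanLessThan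
        continuous_open_preimage[OF u_cont[folded g_def] open_Q1 open_greaterThan])
  have NQ: "ball z r \<times> {s-r^2<..<s-\<tau>} \<subseteq> Q1" using K tau by force
  have PN: "(x0,t0) \<in> N" unfolding N_def using xin ttop tbot upos NQ by (auto simp: g_def)
  have NU: "N \<subseteq> U" unfolding N_def U_def g_def by auto
  have NDc: "N \<subseteq> Dc" unfolding N_def Dc_def by auto
  have Nt: "\<forall>y\<in>N. snd y < s" using tau unfolding N_def by auto
  have C2: "C2_test \<phi> N (\<lambda>x t. (2*c) *\<^sub>R (x - z)) (\<lambda>x t. - c + \<epsilon>/(s-t)^2) (\<lambda>x t. mat (2*c))
     (\<lambda>x t. 0) (\<lambda>x t. 2*\<epsilon>/(s-t)^3)"
    unfolding \<phi>_def by (rule C2_barrier[OF Nopen Nt])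
  have maxN: "\<forall>(y,\<tau>')\<in>N. u y \<tau>' - \<phi> y \<tau>' \<le> u x0 t0 - \<phi> x0 t0"
  proof (intro ballI, clarify)
    fix y t' assume yN: "(y,t') \<in> N"
    hence "u y t' > 0" by (auto simp: N_def g_def)
    hence "W (y,t') = u y t' - \<phi> y t'" by (simp add: W_def g_def)
    moreover have "W (y,t') \<le> W P" using P(2) yN NDc by auto
    ultimately show "u y t' - \<phi> y t' \<le> u x0 t0 - \<phi> x0 t0" using WPe by simp
  qed
  have "F_sub p ((2*c) *\<^sub>R (x0 - z)) (mat (2*c)) (- c + \<epsilon>/(s-t0)^2) \<ge> f x0 t0"
    using sub PN NU C2 maxN unfolding visc_sub_def U_def by blast
  moreover have "f x0 t0 \<ge> c0" using fb PN NU unfolding U_def by auto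
  moreover have "F_sub p ((2*c) *\<^sub>R (x0 - z)) (mat (2*c)) (- c + \<epsilon>/(s-t0)^2)
       = 2*c*(n+p-2)/p + c - \<epsilon>/(s-t0)^2"
    using p by (simp add: F_barrier n_def field_simps)
  moreover have "\<epsilon>/(s-t0)^2 > 0" using epos st by simp
  ultimately show False using cb1 cb2 by linarith
qed

lemma pb_shift:
  fixes z z' x :: "real^'n"
  shows "(x,t) \<in> par_bdry_lower r z' s' \<Longrightarrow> (x - (z' - z), t - (s' - s)) \<in> par_bdry_lower r z s"
proof -
  have "x - (z' - z) - z = x - z'" by (simp add: algebra_simps)
  hence "dist (x - (z' - z)) z = dist x z'" by (simp add: dist_norm)
  thus "(x,t) \<in> par_bdry_lower r z' s' \<Longrightarrow> (x - (z' - z), t - (s' - s)) \<in> par_bdry_lower r z s"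
    by (auto simp: par_bdry_lower_def)
qed

lemma cb_shift:
  fixes z z' x :: "real^'n"
  shows "(x,t) \<in> cball z' r \<times> {s'-r^2..s'+r^2} \<Longrightarrow> (x - (z' - z), t - (s' - s)) \<in> cball z r \<times> {s-r^2..s+r^2}"
proof -
  have "z - (x - (z' - z)) = z' - x" by (simp add: algebra_simps)
  hence "dist z (x - (z' - z)) = dist z' x" by (simp add: dist_norm)
  thus "(x,t) \<in> cball z' r \<times> {s'-r^2..s'+r^2} \<Longrightarrow> (x - (z' - z), t - (s' - s)) \<in> cball z r \<times> {s-r^2..s+r^2}"
    by auto
qed

theorem lemma4p1:
  fixes p c0 c1 :: real
    and u f :: "real^'n \<Rightarrow> real \<Rightarrow> real"
  assumes p: "1 < p"
    and u_cont: "continuous_on Q1 (\<lambda>y. u (fst y) (snd y))"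
    and sol: "visc_sol p f u {(x,t) \<in> Q1. u x t > 0}"
    and c0: "0 < c0"
    and f_bounds: "\<forall>(x,t) \<in> {(x,t) \<in> Q1. u x t > 0}. c0 \<le> f x t \<and> f x t \<le> c1"
  shows "\<forall>z s r. (z,s) \<in> closure {(x,t) \<in> Q1. u x t > 0} \<and> r > 0 \<and>
            closure (cyl r z s) \<subseteq> Q1 \<longrightarrow>
            (SUP y\<in>par_bdry_lower r z s. u (fst y) (snd y))
              \<ge> min (p * c0 / (4 * (real CARD('n) + p - 2))) (c0 / 2) * r^2 + u z s"
proof (intro allI impI, elim conjE)
  fix z :: "real^'n" and s r :: real
  assume zs: "(z,s) \<in> closure {(x,t) \<in> Q1. u x t > 0}" and r: "r > 0"
    and cl: "closure (cyl r z s) \<subseteq> Q1"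
  define U where "U = {(x,t) \<in> Q1. u x t > 0}"
  define \<mu> where "\<mu> = min (p * c0 / (4 * (real CARD('n) + p - 2))) (c0 / 2)"
  define g where "g = (\<lambda>y. u (fst y) (snd y))"
  define K where "K = cball z r \<times> {s-r^2..s+r^2}"
  have KQ: "K \<subseteq> Q1" using cl unfolding closure_cyl[OF r, of z s] K_def .
  have Kc: "compact K" unfolding K_def by (intro compact_Times compact_cball compact_Icc)
  have gK: "continuous_on K g" using continuous_on_subset[OF u_cont KQ] by (simp add: g_def)
  have "bounded (g ` K)" by (intro compact_imp_bounded compact_continuous_image gK Kc)
  hence "bdd_above (g ` K)" by (rule bounded_imp_bdd_above)
  hence bdd: "bdd_above (g ` par_bdry_lower r z s)"
    by (rule bdd_above_mono) (use pb_sub[of r z s] in \<open>auto simp: K_def\<close>)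
  define M where "M = (SUP y\<in>par_bdry_lower r z s. g y)"
  have hM: "\<forall>q\<in>par_bdry_lower r z s. g q \<le> M"
    unfolding M_def using bdd by (auto intro: cSUP_upper)
  have sub: "visc_sub p f u U" using sol by (simp add: visc_sol_def U_def)
  have fb: "\<forall>(x,t)\<in>U. c0 \<le> f x t" using f_bounds by (auto simp: U_def)
  have "\<mu> * r^2 + u z s \<le> M"
  proof (rule field_le_epsilon)
    fix e2 :: real assume e2: "e2 > 0"
    define \<gamma> where "\<gamma> = e2/2"
    have gam: "\<gamma> > 0" using e2 by (simp add: \<gamma>_def)
    obtain e where e: "e > 0" "(\<Union>x\<in>K. ball x e) \<subseteq> Q1"
      using compact_subset_open_imp_ball_epsilon_subset[OF Kc open_Q1 KQ] by blast
    define K2 where "K2 = {x + y | x y. x \<in> K \<and> y \<in> cball 0 (e/2)}"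
    have K2c: "compact K2" unfolding K2_def by (intro compact_sums Kc compact_cball)
    have K2mem: "q + w \<in> K2" if "q \<in> K" "norm w \<le> e/2" for q w
    proof -
      have "w \<in> cball 0 (e/2)" using that(2) by simp
      thus ?thesis unfolding K2_def using that(1) by blast
    qed
    have K2Q: "K2 \<subseteq> Q1"
    proof
      fix y assume "y \<in> K2"
      then obtain a b where ab: "y = a + b" "a \<in> K" "norm b \<le> e/2" unfolding K2_def by auto
      have "dist a y < e" using ab e by (simp add: dist_norm)
      hence "y \<in> ball a e" by simp
      thus "y \<in> Q1" using e(2) ab(2) by (auto simp del: mem_ball)
    qed
    have "uniformly_continuous_on K2 g"
      using continuous_on_subset[OF u_cont K2Q] K2c
      by (simp add: g_def compact_uniformly_continuous)
    then obtain d where d: "d > 0" "\<forall>x\<in>K2. \<forall>x'\<in>K2. dist x' x < d \<longrightarrow> dist (g x') (g x) < \<gamma>"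
      unfolding uniformly_continuous_on_def using gam by metis
    define d' where "d' = min d (e/2)"
    have d'pos: "d' > 0" using d e by (simp add: d'_def)
    obtain y' where y': "y' \<in> U" "dist y' (z,s) < d'"
      using zs d'pos unfolding closure_approachable U_def by blast
    obtain z' s' where zs': "y' = (z',s')" by fastforce
    define w where "w = (z' - z, s' - s)"
    have nw: "norm w < d'" using y' zs' by (simp add: w_def dist_norm)
    have nw2: "norm w \<le> e/2" "norm w < d" using nw by (auto simp: d'_def)
    have shift: "q = (q - w) + w" for q :: "(real^'n) \<times> real" by simp
    have Cb': "cball z' r \<times> {s'-r^2..s'+r^2} \<subseteq> Q1"
    proof
      fix q assume q: "q \<in> cball z' r \<times> {s'-r^2..s'+r^2}"
      obtain x t where qxt: "q = (x,t)" by fastforce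
      have "q - w \<in> K" using cb_shift[of x t z' r s' z s] q qxt by (simp add: K_def w_def)
      hence "(q - w) + w \<in> K2" using nw2 by (intro K2mem)
      hence "q \<in> K2" by simp
      thus "q \<in> Q1" using K2Q by blast
    qed
    have zsK: "(z,s) \<in> K" using r by (simp add: K_def)
    have "dist (g (z',s')) (g (z,s)) < \<gamma>"
    proof -
      have "(z,s) + w \<in> K2" using zsK nw2 by (intro K2mem)
      moreover have "(z,s) + w = (z',s')" by (simp add: w_def)
      moreover have "(z,s) \<in> K2" using K2mem[OF zsK, of 0] e by simp
      moreover have "dist ((z,s) + w) (z,s) < d" using nw2 by (simp add: dist_norm)
      ultimately show ?thesis using d(2) by metis
    qed
    hence ug: "u z' s' \<ge> u z s - \<gamma>" unfolding g_def dist_real_def using absaux[of _ _ "4*\<gamma>"] by simp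
    have bd': "\<forall>(x,t)\<in>par_bdry_lower r z' s'. u x t \<le> M + \<gamma>"
    proof (intro ballI, clarify)
      fix x t assume xt: "(x,t) \<in> par_bdry_lower r z' s'"
      have q0: "(x,t) - w \<in> par_bdry_lower r z s" using pb_shift[OF xt, of z s] by (simp add: w_def)
      hence q0K: "(x,t) - w \<in> K" using pb_sub by (auto simp: K_def)
      have q0K2: "(x,t) - w \<in> K2" using K2mem[OF q0K, of 0] e by simp
      have qK2: "(x,t) \<in> K2" using K2mem[OF q0K nw2(1)] by simp
      have "dist (x,t) ((x,t) - w) < d" using nw2 by (simp add: dist_norm)
      hence "dist (g (x,t)) (g ((x,t) - w)) < \<gamma>" using d(2) q0K2 qK2 by simp
      moreover have "g ((x,t) - w) \<le> M" using hM q0 by blast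
      ultimately show "u x t \<le> M + \<gamma>" unfolding g_def dist_real_def by (simp add: abs_less_iff) 
    qed
    have upos: "u z' s' > 0" using y' zs' by (simp add: U_def)
    have "M + \<gamma> \<ge> \<mu> * r^2 + u z' s'"
      by (rule main[OF p u_cont sub[unfolded U_def] c0 fb[unfolded U_def] upos r Cb' bd' \<mu>_def])
    thus "\<mu> * r^2 + u z s \<le> M + e2" using ug by (simp add: \<gamma>_def)
  qed
  thus "(SUP y\<in>par_bdry_lower r z s. u (fst y) (snd y)) \<ge> \<mu> * r^2 + u z s"
    by (simp add: M_def g_def)
qed

end
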